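(* Let $\Gamma$ be a set of clauses. If $\Gamma$ has a regWRTL refutation $R$, then $\Gamma$ has a pool resolution refutation $R'$ whose size is no greater than the size of $R$.
   Context: A literal is a propositional variable $x$ or its negation $\overline{x}$; a clause is a set of literals, interpreted as their disjunction. Three inference rules deriving a clause $C$ from clauses $A$ and $B$ with respect to a literal $x$ (the resolution variable), where $\overline{x}\notin A$ and $x\notin B$: - Resolution: requires $x\in A$, $\overline{x}\in B$, and $C=(A\setminus\{x\})\cup(B\setminus\{\overline{x}\})$. - Degenerate resolution: if $x\in A$ and $\overline x\in B$, $C$ is as in resolution; if $x\in A$ and $\overline x\notin B$, $C=B$; if $x\notin A$ and $\overline x\in B$, $C=A$; otherwise $C$ is one of $A$ or $B$. - w-resolution: $C=(A\setminus\{x\})\cup(B\setminus\{\overline{x}\})$ (no requirement that $x\in A$ or $\overline x\in B$). For a tree $T$, the postorder $<_T$ is defined by: if $v$ is in the subtree of the left child of $u$ and $w$ in the subtree of the right child of $u$, then $v<_T w<_T u$. A regRTL derivation of a clause $C$ from $\Gamma$ is a tree-like derivation $T$ such that (a) each leaf is labeled with either a clause of $\Gamma$ or a clause (a "lemma") that labels some node earlier in $T$ in the postorder $<_T$; (b) each internal node is labeled with a clause and a variable, and its clause is obtained by resolution on that variable from the clauses labeling its two children; (c) $T$ is regular: no variable is used as resolution variable more than once along any root-to-leaf path, and no variable occurring in $C$ is used as a resolution variable; (d) the root is labeled $C$. It is a refutation if $C$ is the empty clause. A regWRTL derivation is defined the same way but allowing w-resolution inferences in (b); a pool resolution derivation is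 defined the same way but allowing degenerate resolution inferences in (b). The size of a derivation is the number of clauses (nodes) in it. *)

theory Defs
  imports Main
begin

datatype 'v lit = Pos 'v | Neg 'v

fun var :: "'v lit \<Rightarrow> 'v" where
  "var (Pos v) = v"
| "var (Neg v) = v"

fun comp :: "'v lit \<Rightarrow> 'v lit" where
  "comp (Pos v) = Neg v"
| "comp (Neg v) = Pos v"

type_synonym 'v clause = "'v lit set"

definition vars :: "'v clause \<Rightarrow> 'v set" where
  "vars C = var ` C"

definition res_rule :: "'v lit \<Rightarrow> 'v clause \<Rightarrow> 'v clause \<Rightarrow> 'v clause \<Rightarrow> bool" where
  "res_rule x A B C \<longleftrightarrow> comp x \<notin> A \<and> x \<notin> B \<and> x \<in> A \<and> comp x \<in> B \<and>
     C = (A - {x}) \<union> (B - {comp x})"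

definition dres_rule :: "'v lit \<Rightarrow> 'v clause \<Rightarrow> 'v clause \<Rightarrow> 'v clause \<Rightarrow> bool" where
  "dres_rule x A B C \<longleftrightarrow> comp x \<notin> A \<and> x \<notin> B \<and>
     (if x \<in> A \<and> comp x \<in> B then C = (A - {x}) \<union> (B - {comp x})
      else if x \<in> A \<and> comp x \<notin> B then C = B
      else if x \<notin> A \<and> comp x \<in> B then C = A
      else (C = A \<or> C = B))"

definition wres_rule :: "'v lit \<Rightarrow> 'v clause \<Rightarrow> 'v clause \<Rightarrow> 'v clause \<Rightarrow> bool" where
  "wres_rule x A B C \<longleftrightarrow> comp x \<notin> A \<and> x \<notin> B \<and> C = (A - {x}) \<union> (B - {comp x})"

text \<open>A leaf carries a clause; an internal node carries its clause, the resolution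
  literal x (whose variable is the resolution variable), and its left child (the
  premise A) and right child (the premise B).\<close>

datatype 'v dtree = Leaf "'v clause" | Node "'v clause" "'v lit" "'v dtree" "'v dtree"

fun label :: "'v dtree \<Rightarrow> 'v clause" where
  "label (Leaf C) = C"
| "label (Node C x l r) = C"

text \<open>Positions of nodes: paths from the root, False = left child, True = right child.\<close>

fun positions :: "'v dtree \<Rightarrow> bool list set" where
  "positions (Leaf C) = {[]}"
| "positions (Node C x l r) =
     insert [] (Cons False ` positions l \<union> Cons True ` positions r)"

fun sub :: "'v dtree \<Rightarrow> bool list \<Rightarrow> 'v dtree" where
  "sub t [] = t"
| "sub (Node C x l r) (False # p) = sub l p"
| "sub (Node C x l r) (True # p) = sub r p"
| "sub (Leaf C) (b # p) = Leaf C"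

definition post_less :: "bool list \<Rightarrow> bool list \<Rightarrow> bool" where
  "post_less p q \<longleftrightarrow> (\<exists>d. d \<noteq> [] \<and> p = q @ d) \<or>
     (\<exists>c p' q'. p = c @ False # p' \<and> q = c @ True # q')"

fun is_leaf :: "'v dtree \<Rightarrow> bool" where
  "is_leaf (Leaf C) = True"
| "is_leaf (Node C x l r) = False"

fun resvar :: "'v dtree \<Rightarrow> 'v option" where
  "resvar (Leaf C) = None"
| "resvar (Node C x l r) = Some (var x)"

definition size_d :: "'v dtree \<Rightarrow> nat" where
  "size_d T = card (positions T)"

definition rtl_deriv ::
  "('v lit \<Rightarrow> 'v clause \<Rightarrow> 'v clause \<Rightarrow> 'v clause \<Rightarrow> bool) \<Rightarrow>
   'v clause set \<Rightarrow> 'v dtree \<Rightarrow> 'v clause \<Rightarrow> bool" where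
  "rtl_deriv rule \<Gamma> T C \<longleftrightarrow>
     \<comment> \<open>(a) leaves: clauses of \<Gamma> or lemmas from earlier nodes in postorder\<close>
     (\<forall>p\<in>positions T. is_leaf (sub T p) \<longrightarrow>
        label (sub T p) \<in> \<Gamma> \<or>
        (\<exists>q\<in>positions T. post_less q p \<and> label (sub T q) = label (sub T p))) \<and>
     \<comment> \<open>(b) internal nodes are inferences by the rule\<close>
     (\<forall>p\<in>positions T. \<forall>D x l r. sub T p = Node D x l r \<longrightarrow> rule x (label l) (label r) D) \<and>
     \<comment> \<open>(c) regularity\<close>
     (\<forall>p\<in>positions T. \<forall>d. d \<noteq> [] \<longrightarrow> p @ d \<in> positions T \<longrightarrow>
        resvar (sub T p) = None \<or> resvar (sub T p) \<noteq> resvar (sub T (p @ d))) \<and>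
     (\<forall>p\<in>positions T. \<forall>v. resvar (sub T p) = Some v \<longrightarrow> v \<notin> vars C) \<and>
     \<comment> \<open>(d) root\<close>
     label T = C"

definition regRTL_deriv where "regRTL_deriv = rtl_deriv res_rule"
definition regWRTL_deriv where "regWRTL_deriv = rtl_deriv wres_rule"
definition pool_deriv where "pool_deriv = rtl_deriv dres_rule"

end

theory Submission
  imports Defs
begin

lemma post_less_nil1[simp]: "\<not> post_less [] p"
  unfolding post_less_def by auto

lemma post_less_cons: "post_less (a#p) (b#q) \<longleftrightarrow> (a = b \<and> post_less p q) \<or> (a = False \<and> b = True)"
proof
  assume "post_less (a#p) (b#q)"
  then consider (A) d where "d \<noteq> []" "a#p = (b#q) @ d"
    | (B) c p' q' where "a#p = c @ False # p'" "b#q = c @ True # q'"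
    unfolding post_less_def by blast
  then show "(a = b \<and> post_less p q) \<or> (a = False \<and> b = True)"
  proof cases
    case A then show ?thesis unfolding post_less_def by auto
  next
    case B
    show ?thesis
    proof (cases c)
      case Nil then show ?thesis using B by simp
    next
      case (Cons c0 cs)
      then have "a = b" "p = cs @ False # p'" "q = cs @ True # q'" using B by auto
      then show ?thesis unfolding post_less_def by blast
    qed
  qed
next
  assume h: "(a = b \<and> post_less p q) \<or> (a = False \<and> b = True)"
  show "post_less (a#p) (b#q)"
  proof (cases "a = False \<and> b = True")
    case True
    then have "a#p = [] @ False # p \<and> b#q = [] @ True # q" by simp
    then show ?thesis unfolding post_less_def by blast
  next
    case False
    with h have ab: "a = b" and pq: "post_less p q" by auto
    from pq consider (A) d where "d \<noteq> []" "p = q @ d"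
      | (B) c p' q' where "p = c @ False # p'" "q = c @ True # q'"
      unfolding post_less_def by blast
    then show ?thesis
    proof cases
      case A
      then have "a#p = (b#q) @ d" using ab by simp
      then show ?thesis unfolding post_less_def using A(1) by blast
    next
      case B
      then have "a#p = (a#c) @ False # p' \<and> b#q = (a#c) @ True # q'" using ab by simp
      then show ?thesis unfolding post_less_def by blast
    qed
  qed
qed

lemma sub_Leaf[simp]: "sub (Leaf C) p = Leaf C"
  by (cases p) auto

definition dres :: "'v lit \<Rightarrow> 'v clause \<Rightarrow> 'v clause \<Rightarrow> 'v clause" where
  "dres x A B = (if x \<in> A \<and> comp x \<in> B then (A - {x}) \<union> (B - {comp x})
                 else if x \<in> A then B else A)"

fun tr :: "('v clause \<Rightarrow> 'v clause option) \<Rightarrow> 'v dtree \<Rightarrow> 'v dtree \<times> ('v clause \<Rightarrow> 'v clause option)" where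
  "tr M (Leaf C) = (let D = (case M C of None \<Rightarrow> C | Some D \<Rightarrow> D) in (Leaf D, M(C \<mapsto> D)))"
| "tr M (Node C x l r) = (let (l', M1) = tr M l; (r', M2) = tr M1 r; D = dres x (label l') (label r')
      in (Node D x l' r', M2(C \<mapsto> D)))"

definition labs :: "'v dtree \<Rightarrow> 'v clause set" where
  "labs T = (\<lambda>p. label (sub T p)) ` positions T"

lemma labs_Node: "labs (Node C x l r) = insert C (labs l \<union> labs r)"
  unfolding labs_def by (simp add: image_Un image_image)

lemma dres_ok:
  assumes "wres_rule x A B C" "A' \<subseteq> A" "B' \<subseteq> B"
  shows "dres_rule x A' B' (dres x A' B') \<and> dres x A' B' \<subseteq> C"
  using assms unfolding wres_rule_def dres_rule_def dres_def by auto

lemma main: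
  assumes "\<forall>p\<in>positions T. is_leaf (sub T p) \<longrightarrow> label (sub T p) \<in> \<Gamma> \<or> label (sub T p) \<in> dom M \<or>
             (\<exists>q\<in>positions T. post_less q p \<and> label (sub T q) = label (sub T p))"
    and "\<forall>p\<in>positions T. \<forall>D x l r. sub T p = Node D x l r \<longrightarrow> wres_rule x (label l) (label r) D"
    and "\<forall>C D. M C = Some D \<longrightarrow> D \<subseteq> C \<and> D \<in> E"
    and "tr M T = (T', M')"
  shows "positions T' = positions T \<and> (\<forall>p. resvar (sub T' p) = resvar (sub T p)) \<and> label T' \<subseteq> label T
   \<and> (\<forall>p\<in>positions T'. is_leaf (sub T' p) \<longrightarrow> label (sub T' p) \<in> \<Gamma> \<or> label (sub T' p) \<in> E \<or>
         (\<exists>q\<in>positions T'. post_less q p \<and> label (sub T' q) = label (sub T' p)))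
   \<and> (\<forall>p\<in>positions T'. \<forall>D x l r. sub T' p = Node D x l r \<longrightarrow> dres_rule x (label l) (label r) D)
   \<and> (\<forall>C D. M' C = Some D \<longrightarrow> D \<subseteq> C \<and> (D \<in> E \<or> D \<in> labs T'))
   \<and> dom M' = dom M \<union> labs T"
  using assms
proof (induction T arbitrary: M E T' M')
  case (Leaf C)
  show ?case
  proof (cases "M C")
    case None
    with Leaf have "C \<in> \<Gamma>" by auto
    with None Leaf show ?thesis by (fastforce simp: labs_def split: if_splits)
  next
    case (Some D)
    with Leaf show ?thesis by (fastforce simp: labs_def split: if_splits)
  qed
next
  case (Node C x l r)
  obtain l' M1 where hl: "tr M l = (l', M1)" by (cases "tr M l")
  obtain r' M2 where hr: "tr M1 r = (r', M2)" by (cases "tr M1 r")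
  define D where "D = dres x (label l') (label r')"
  have T': "T' = Node D x l' r'" and M': "M' = M2(C \<mapsto> D)"
    using Node.prems(4) hl hr unfolding D_def by (auto simp: Let_def)
  have Hl1: "\<forall>p\<in>positions l. is_leaf (sub l p) \<longrightarrow> label (sub l p) \<in> \<Gamma> \<or> label (sub l p) \<in> dom M \<or>
             (\<exists>q\<in>positions l. post_less q p \<and> label (sub l q) = label (sub l p))"
  proof (intro ballI impI)
    fix p assume p: "p \<in> positions l" "is_leaf (sub l p)"
    have pp: "False#p \<in> positions (Node C x l r)" using p(1) by simp
    have "label (sub l p) \<in> \<Gamma> \<or> label (sub l p) \<in> dom M \<or>
             (\<exists>q\<in>positions (Node C x l r). post_less q (False#p) \<and> label (sub (Node C x l r) q) = label (sub l p))"
      using Node.prems(1) pp p(2) by fastforce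
    then show "label (sub l p) \<in> \<Gamma> \<or> label (sub l p) \<in> dom M \<or>
             (\<exists>q\<in>positions l. post_less q p \<and> label (sub l q) = label (sub l p))"
      by (auto simp: post_less_cons)
  qed
  have Hl2: "\<forall>p\<in>positions l. \<forall>D x l0 r0. sub l p = Node D x l0 r0 \<longrightarrow> wres_rule x (label l0) (label r0) D"
  proof (intro ballI allI impI)
    fix p D' x' l0 r0 assume p: "p \<in> positions l" "sub l p = Node D' x' l0 r0"
    have pp: "False#p \<in> positions (Node C x l r)" using p(1) by simp
    show "wres_rule x' (label l0) (label r0) D'" using Node.prems(2) pp p(2) by fastforce
  qed
  have IHl: "positions l' = positions l \<and> (\<forall>p. resvar (sub l' p) = resvar (sub l p)) \<and> label l' \<subseteq> label l
   \<and> (\<forall>p\<in>positions l'. is_leaf (sub l' p) \<longrightarrow> label (sub l' p) \<in> \<Gamma> \<or> label (sub l' p) \<in> E \<or>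
         (\<exists>q\<in>positions l'. post_less q p \<and> label (sub l' q) = label (sub l' p)))
   \<and> (\<forall>p\<in>positions l'. \<forall>D x l r. sub l' p = Node D x l r \<longrightarrow> dres_rule x (label l) (label r) D)
   \<and> (\<forall>C D. M1 C = Some D \<longrightarrow> D \<subseteq> C \<and> (D \<in> E \<or> D \<in> labs l'))
   \<and> dom M1 = dom M \<union> labs l"
    by (rule Node.IH(1)[OF Hl1 Hl2 Node.prems(3) hl])
  then have lP: "positions l' = positions l" and lR: "\<forall>p. resvar (sub l' p) = resvar (sub l p)"
    and lL: "label l' \<subseteq> label l"
    and lLeaf: "\<forall>p\<in>positions l'. is_leaf (sub l' p) \<longrightarrow> label (sub l' p) \<in> \<Gamma> \<or> label (sub l' p) \<in> E \<or>
         (\<exists>q\<in>positions l'. post_less q p \<and> label (sub l' q) = label (sub l' p))"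
    and lD: "\<forall>p\<in>positions l'. \<forall>D x l r. sub l' p = Node D x l r \<longrightarrow> dres_rule x (label l) (label r) D"
    and lM: "\<forall>C D. M1 C = Some D \<longrightarrow> D \<subseteq> C \<and> (D \<in> E \<or> D \<in> labs l')"
    and ldom: "dom M1 = dom M \<union> labs l"
    by blast+
  have Hr1: "\<forall>p\<in>positions r. is_leaf (sub r p) \<longrightarrow> label (sub r p) \<in> \<Gamma> \<or> label (sub r p) \<in> dom M1 \<or>
             (\<exists>q\<in>positions r. post_less q p \<and> label (sub r q) = label (sub r p))"
  proof (intro ballI impI)
    fix p assume p: "p \<in> positions r" "is_leaf (sub r p)"
    have pp: "True#p \<in> positions (Node C x l r)" using p(1) by simp
    have "label (sub r p) \<in> \<Gamma> \<or> label (sub r p) \<in> dom M \<or>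
             (\<exists>q\<in>positions (Node C x l r). post_less q (True#p) \<and> label (sub (Node C x l r) q) = label (sub r p))"
      using Node.prems(1) pp p(2) by fastforce
    then show "label (sub r p) \<in> \<Gamma> \<or> label (sub r p) \<in> dom M1 \<or>
             (\<exists>q\<in>positions r. post_less q p \<and> label (sub r q) = label (sub r p))"
      unfolding ldom labs_def by (auto simp: post_less_cons) (metis (mono_tags, lifting) image_eqI)
  qed
  have Hr2: "\<forall>p\<in>positions r. \<forall>D x l0 r0. sub r p = Node D x l0 r0 \<longrightarrow> wres_rule x (label l0) (label r0) D"
  proof (intro ballI allI impI)
    fix p D' x' l0 r0 assume p: "p \<in> positions r" "sub r p = Node D' x' l0 r0"
    have pp: "True#p \<in> positions (Node C x l r)" using p(1) by simp
    show "wres_rule x' (label l0) (label r0) D'" using Node.prems(2) pp p(2) by fastforce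
  qed
  have Hr3: "\<forall>C D. M1 C = Some D \<longrightarrow> D \<subseteq> C \<and> D \<in> E \<union> labs l'"
    using lM by blast
  have IHr: "positions r' = positions r \<and> (\<forall>p. resvar (sub r' p) = resvar (sub r p)) \<and> label r' \<subseteq> label r
   \<and> (\<forall>p\<in>positions r'. is_leaf (sub r' p) \<longrightarrow> label (sub r' p) \<in> \<Gamma> \<or> label (sub r' p) \<in> E \<union> labs l' \<or>
         (\<exists>q\<in>positions r'. post_less q p \<and> label (sub r' q) = label (sub r' p)))
   \<and> (\<forall>p\<in>positions r'. \<forall>D x l r. sub r' p = Node D x l r \<longrightarrow> dres_rule x (label l) (label r) D)
   \<and> (\<forall>C D. M2 C = Some D \<longrightarrow> D \<subseteq> C \<and> (D \<in> E \<union> labs l' \<or> D \<in> labs r'))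
   \<and> dom M2 = dom M1 \<union> labs r"
    by (rule Node.IH(2)[OF Hr1 Hr2 Hr3 hr])
  then have rP: "positions r' = positions r" and rR: "\<forall>p. resvar (sub r' p) = resvar (sub r p)"
    and rL: "label r' \<subseteq> label r"
    and rLeaf: "\<forall>p\<in>positions r'. is_leaf (sub r' p) \<longrightarrow> label (sub r' p) \<in> \<Gamma> \<or> label (sub r' p) \<in> E \<union> labs l' \<or>
         (\<exists>q\<in>positions r'. post_less q p \<and> label (sub r' q) = label (sub r' p))"
    and rD: "\<forall>p\<in>positions r'. \<forall>D x l r. sub r' p = Node D x l r \<longrightarrow> dres_rule x (label l) (label r) D"
    and rM: "\<forall>C D. M2 C = Some D \<longrightarrow> D \<subseteq> C \<and> (D \<in> E \<union> labs l' \<or> D \<in> labs r')"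
    and rdom: "dom M2 = dom M1 \<union> labs r"
    by blast+
  have w: "wres_rule x (label l) (label r) C" using Node.prems(2) by auto
  have dr: "dres_rule x (label l') (label r') D \<and> D \<subseteq> C"
    unfolding D_def using dres_ok[OF w lL rL] .
  show ?case
  proof (intro conjI)
    show "positions T' = positions (Node C x l r)" using T' lP rP by simp
    show "\<forall>p. resvar (sub T' p) = resvar (sub (Node C x l r) p)"
    proof
      fix p show "resvar (sub T' p) = resvar (sub (Node C x l r) p)"
      proof (cases p)
        case (Cons b p') then show ?thesis using T' lR rR by (cases b) auto
      qed (simp add: T')
    qed
    show "label T' \<subseteq> label (Node C x l r)" using T' dr by simp
    show "\<forall>p\<in>positions T'. is_leaf (sub T' p) \<longrightarrow> label (sub T' p) \<in> \<Gamma> \<or> label (sub T' p) \<in> E \<or>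
         (\<exists>q\<in>positions T'. post_less q p \<and> label (sub T' q) = label (sub T' p))"
    proof (intro ballI impI)
      fix p assume p: "p \<in> positions T'" "is_leaf (sub T' p)"
      from p T' obtain b p' where pp: "p = b # p'" by (cases p) auto
      show "label (sub T' p) \<in> \<Gamma> \<or> label (sub T' p) \<in> E \<or>
         (\<exists>q\<in>positions T'. post_less q p \<and> label (sub T' q) = label (sub T' p))"
      proof (cases b)
        case False
        with p pp T' have "p' \<in> positions l'" "is_leaf (sub l' p')" by auto
        with lLeaf have "label (sub l' p') \<in> \<Gamma> \<or> label (sub l' p') \<in> E \<or>
           (\<exists>q\<in>positions l'. post_less q p' \<and> label (sub l' q) = label (sub l' p'))" by blast
        then show ?thesis
        proof (elim disjE)
          assume "\<exists>q\<in>positions l'. post_less q p' \<and> label (sub l' q) = label (sub l' p')"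
          then obtain q where "q\<in>positions l'" "post_less q p'" "label (sub l' q) = label (sub l' p')" by blast
          then show ?thesis using T' pp False
            by (intro disjI2 bexI[of _ "False#q"]) (auto simp: post_less_cons)
        qed (use T' pp False in auto)
      next
        case True
        with p pp T' have "p' \<in> positions r'" "is_leaf (sub r' p')" by auto
        with rLeaf have "label (sub r' p') \<in> \<Gamma> \<or> label (sub r' p') \<in> E \<union> labs l' \<or>
           (\<exists>q\<in>positions r'. post_less q p' \<and> label (sub r' q) = label (sub r' p'))" by blast
        then show ?thesis
        proof (elim disjE)
          assume "\<exists>q\<in>positions r'. post_less q p' \<and> label (sub r' q) = label (sub r' p')"
          then obtain q where "q\<in>positions r'" "post_less q p'" "label (sub r' q) = label (sub r' p')" by blast
          then show ?thesis using T' pp True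
            by (intro disjI2 bexI[of _ "True#q"]) (auto simp: post_less_cons)
        next
          assume "label (sub r' p') \<in> E \<union> labs l'"
          then show ?thesis
          proof
            assume "label (sub r' p') \<in> labs l'"
            then obtain q where "q\<in>positions l'" "label (sub l' q) = label (sub r' p')"
              unfolding labs_def by blast
            then show ?thesis using T' pp True
              by (intro disjI2 bexI[of _ "False#q"]) (auto simp: post_less_cons)
          qed (use T' pp True in auto)
        qed (use T' pp True in auto)
      qed
    qed
    show "\<forall>p\<in>positions T'. \<forall>D' x' l0 r0. sub T' p = Node D' x' l0 r0 \<longrightarrow> dres_rule x' (label l0) (label r0) D'"
    proof (intro ballI allI impI)
      fix p D' x' l0 r0 assume p: "p \<in> positions T'" "sub T' p = Node D' x' l0 r0"
      show "dres_rule x' (label l0) (label r0) D'"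
      proof (cases p)
        case Nil then show ?thesis using p T' dr by simp
      next
        case (Cons b p') then show ?thesis using p T' lD rD by (cases b) auto
      qed
    qed
    show "\<forall>C' D'. M' C' = Some D' \<longrightarrow> D' \<subseteq> C' \<and> (D' \<in> E \<or> D' \<in> labs T')"
    proof (intro allI impI)
      fix C' D' assume h: "M' C' = Some D'"
      show "D' \<subseteq> C' \<and> (D' \<in> E \<or> D' \<in> labs T')"
      proof (cases "C' = C")
        case True then show ?thesis using h M' dr T' by (simp add: labs_Node)
      next
        case False
        then have "M2 C' = Some D'" using h M' by simp
        then show ?thesis using rM T' by (simp add: labs_Node) blast
      qed
    qed
    show "dom M' = dom M \<union> labs (Node C x l r)"
      using M' ldom rdom by (auto simp: labs_Node)
  qed
qed

theorem proposition1p9: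
  fixes \<Gamma> :: "'v clause set" and R :: "'v dtree"
  assumes "regWRTL_deriv \<Gamma> R {}"
  shows "\<exists>R'. pool_deriv \<Gamma> R' {} \<and> size_d R' \<le> size_d R"
proof -
  obtain R' M' where h: "tr Map.empty R = (R', M')" by (cases "tr Map.empty R")
  have A: "rtl_deriv wres_rule \<Gamma> R {}" using assms unfolding regWRTL_deriv_def .
  have M: "positions R' = positions R \<and> (\<forall>p. resvar (sub R' p) = resvar (sub R p)) \<and> label R' \<subseteq> label R
   \<and> (\<forall>p\<in>positions R'. is_leaf (sub R' p) \<longrightarrow> label (sub R' p) \<in> \<Gamma> \<or> label (sub R' p) \<in> {} \<or>
         (\<exists>q\<in>positions R'. post_less q p \<and> label (sub R' q) = label (sub R' p)))
   \<and> (\<forall>p\<in>positions R'. \<forall>D x l r. sub R' p = Node D x l r \<longrightarrow> dres_rule x (label l) (label r) D)"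
    using main[OF _ _ _ h, of \<Gamma> "{}"] A[unfolded rtl_deriv_def] by auto
  have "pool_deriv \<Gamma> R' {}"
    unfolding pool_deriv_def rtl_deriv_def vars_def
    using M A[unfolded rtl_deriv_def] by auto
  moreover have "size_d R' \<le> size_d R" unfolding size_d_def using M by simp
  ultimately show ?thesis by blast
qed

end
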